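(* For every integer $n\ge 0$: if $n\equiv 0,1\pmod 4$ then $p_0(n) > \tfrac12 p(n)$, and if $n\equiv 2,3\pmod 4$ then $p_0(n) < \tfrac12 p(n)$.
   Context: For a partition $\pi$, let $\mathcal O(\pi)$ denote the number of odd parts of $\pi$ and $\pi'$ the conjugate partition. Let $p(n)$ be the number of partitions of $n$, and for $i=0,2$ let $p_i(n)$ be the number of partitions $\pi$ of $n$ with $\mathcal O(\pi)-\mathcal O(\pi')\equiv i\pmod 4$ (since $\mathcal O(\pi)\equiv\mathcal O(\pi')\equiv n \pmod 2$, one has $p(n)=p_0(n)+p_2(n)$). *)

theory Defs
  imports Complex_Main
begin

definition partitions :: "nat \<Rightarrow> nat list set" where
  "partitions n = {xs. sorted_wrt (\<ge>) xs \<and> 0 \<notin> set xs \<and> sum_list xs = n}"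

definition conj_part :: "nat list \<Rightarrow> nat list" where
  "conj_part xs = map (\<lambda>i. length (filter (\<lambda>x. i \<le> x) xs)) [1..<Suc (Max (insert 0 (set xs)))]"

definition num_odd :: "nat list \<Rightarrow> nat" where
  "num_odd xs = length (filter odd xs)"

definition p :: "nat \<Rightarrow> nat" where
  "p n = card (partitions n)"

definition p_i :: "int \<Rightarrow> nat \<Rightarrow> nat" where
  "p_i i n = card {xs \<in> partitions n.
      (int (num_odd xs) - int (num_odd (conj_part xs))) mod 4 = i mod 4}"

end

theory Submission
  imports Defs "HOL-Computational_Algebra.Formal_Power_Series"
begin

unbundle fps_syntax


fun dd :: "nat list \<Rightarrow> int" where
  "dd [] = 0"
| "dd (x#xs) = (if odd x then 1 else 0) - dd xs"

definition cnt :: "nat \<Rightarrow> nat list \<Rightarrow> nat" where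
  "cnt i xs = length (filter (\<lambda>y. i \<le> y) xs)"

definition oddc :: "nat \<Rightarrow> nat list \<Rightarrow> nat" where
  "oddc B xs = length (filter (\<lambda>i. odd (cnt i xs)) [1..<Suc B])"

lemma conj_part_alt: "num_odd (conj_part xs) = oddc (Max (insert 0 (set xs))) xs"
  by (simp add: num_odd_def conj_part_def oddc_def cnt_def filter_map comp_def)

lemma oddc_mono_eq:
  assumes "Max (insert 0 (set xs)) \<le> B"
  shows "oddc B xs = oddc (Max (insert 0 (set xs))) xs"
proof -
  let ?m = "Max (insert 0 (set xs))"
  have split: "[1..<Suc B] = [1..<Suc ?m] @ [Suc ?m..<Suc B]"
    using upt_add_eq_append[of 1 "Suc ?m" "B - ?m"] assms by simp
  have "\<forall>i\<in>set [Suc ?m..<Suc B]. cnt i xs = 0"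
  proof
    fix i assume "i \<in> set [Suc ?m..<Suc B]"
    hence "i \<in> {Suc ?m..<Suc B}" by (simp only: set_upt)
    hence i: "Suc ?m \<le> i" by (simp only: atLeastLessThan_iff)
    have "y < i" if "y \<in> set xs" for y
    proof -
      have "y \<le> ?m" by (rule Max_ge) (use that in auto)
      thus ?thesis using i by linarith
    qed
    hence "\<forall>y\<in>set xs. y < i" by blast
    thus "cnt i xs = 0" unfolding cnt_def
      by (auto simp: filter_empty_conv not_le)
  qed
  hence "filter (\<lambda>i. odd (cnt i xs)) [Suc ?m..<Suc B] = []"
    by (simp add: filter_empty_conv)
  thus ?thesis unfolding oddc_def split by simp
qed

lemma conj_cons:
  assumes "\<forall>y\<in>set xs. y \<le> x"
  shows "num_odd (conj_part (x#xs)) + num_odd (conj_part xs) = x"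
proof -
  have m1: "Max (insert 0 (set (x#xs))) = x"
  proof (rule Max_eqI)
    show "finite (insert 0 (set (x # xs)))" by simp
    show "y \<le> x" if "y \<in> insert 0 (set (x # xs))" for y using that assms by auto
    show "x \<in> insert 0 (set (x # xs))" by simp
  qed
  have m2: "Max (insert 0 (set xs)) \<le> x"
    using assms by auto
  have c0: "cnt i (x#xs) = Suc (cnt i xs)" if "i \<le> x" for i
    using that by (simp add: cnt_def)
  have c: "\<forall>i\<in>set [1..<Suc x]. cnt i (x#xs) = Suc (cnt i xs)"
  proof
    fix i assume "i \<in> set [1..<Suc x]"
    then have "i < Suc x" by (simp only: set_upt atLeastLessThan_iff)
    then have "i \<le> x" by (simp only: less_Suc_eq_le)
    thus "cnt i (x#xs) = Suc (cnt i xs)" using c0 by blast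
  qed
  have "num_odd (conj_part (x#xs)) = length (filter (\<lambda>i. odd (cnt i (x#xs))) [1..<Suc x])"
    by (simp only: conj_part_alt m1 oddc_def)
  also have "\<dots> = length (filter (\<lambda>i. \<not> odd (cnt i xs)) [1..<Suc x])"
    using c by (metis (no_types, lifting) even_Suc filter_cong)
  finally have a: "num_odd (conj_part (x#xs)) = length (filter (\<lambda>i. \<not> odd (cnt i xs)) [1..<Suc x])" .
  have b: "num_odd (conj_part xs) = length (filter (\<lambda>i. odd (cnt i xs)) [1..<Suc x])"
  proof -
    have "num_odd (conj_part xs) = oddc x xs"
      using conj_part_alt[of xs] oddc_mono_eq[OF m2] by metis
    thus ?thesis unfolding oddc_def .
  qed
  have l: "length [1..<Suc x] = x" by simp
  show ?thesis using a b l sum_length_filter_compl[of "\<lambda>i. odd (cnt i xs)" "[1..<Suc x]"] by linarith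
qed

lemma key_cong:
  assumes "sorted_wrt (\<ge>) xs"
  shows "(int (num_odd xs) - int (num_odd (conj_part xs))) mod 4 = (int (sum_list xs) - dd xs) mod 4
       \<and> int (num_odd (conj_part xs)) mod 2 = int (sum_list xs) mod 2
       \<and> dd xs mod 2 = int (sum_list xs) mod 2"
  using assms
proof (induction xs)
  case Nil
  then show ?case by (simp add: num_odd_def conj_part_def)
next
  case (Cons x xs)
  have le: "\<forall>y\<in>set xs. y \<le> x" using Cons.prems by auto
  have IH: "(int (num_odd xs) - int (num_odd (conj_part xs))) mod 4 = (int (sum_list xs) - dd xs) mod 4"
    "int (num_odd (conj_part xs)) mod 2 = int (sum_list xs) mod 2"
    "dd xs mod 2 = int (sum_list xs) mod 2" using Cons by auto
  have C: "int (num_odd (conj_part (x#xs))) = int x - int (num_odd (conj_part xs))"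
    using conj_cons[OF le] by linarith
  have O: "int (num_odd (x#xs)) = (if odd x then 1 else 0) + int (num_odd xs)"
    by (simp add: num_odd_def)
  have D: "dd (x#xs) = (if odd x then 1 else 0) - dd xs" by simp
  have S: "int (sum_list (x#xs)) = int x + int (sum_list xs)" by simp
  have "4 dvd (int (num_odd xs) - int (num_odd (conj_part xs))) - (int (sum_list xs) - dd xs)"
    using IH(1) mod_eq_dvd_iff by blast
  then obtain k where k: "(int (num_odd xs) - int (num_odd (conj_part xs))) - (int (sum_list xs) - dd xs) = 4 * k"
    by (rule dvdE)
  have "2 dvd int (num_odd (conj_part xs)) - int (sum_list xs)"
    using IH(2) mod_eq_dvd_iff by blast
  then obtain a where a: "int (num_odd (conj_part xs)) - int (sum_list xs) = 2 * a"
    by (rule dvdE)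
  have "2 dvd dd xs - int (sum_list xs)"
    using IH(3) mod_eq_dvd_iff by blast
  then obtain b where b: "dd xs - int (sum_list xs) = 2 * b"
    by (rule dvdE)
  have "2 dvd (if odd x then 1 else 0) - int x"
    by (cases "odd x") auto
  then obtain e where e: "(if odd x then 1 else 0) - int x = 2 * e"
    by (rule dvdE)
  have 1: "(int (num_odd (x#xs)) - int (num_odd (conj_part (x#xs)))) - (int (sum_list (x#xs)) - dd (x#xs))
     = 4 * (k + a - b + e)"
    unfolding C O D S using k a b e by (simp add: algebra_simps)
  have 2: "int (num_odd (conj_part (x#xs))) - int (sum_list (x#xs)) = 2 * (- a - int (sum_list xs))"
    unfolding C S using a by (simp add: algebra_simps)
  have 3: "dd (x#xs) - int (sum_list (x#xs)) = 2 * (e - b - int (sum_list xs))"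
    unfolding D S using b e by (simp add: algebra_simps)
  show ?case unfolding mod_eq_dvd_iff 1 2 3 by simp
qed



type_synonym rf = "real fps"

fun gb :: "rf \<Rightarrow> nat \<Rightarrow> nat \<Rightarrow> rf" where
  "gb Q 0 k = (if k = 0 then 1 else 0)"
| "gb Q (Suc N) k = (if k = 0 then 1 else gb Q N (k - 1) + Q^k * gb Q N k)"

definition poch :: "rf \<Rightarrow> nat \<Rightarrow> rf" where
  "poch Q N = (\<Prod>i\<in>{1..N}. (1 - Q^i))"

lemma poch_0[simp]: "poch Q 0 = 1" by (simp add: poch_def)
lemma poch_Suc: "poch Q (Suc N) = poch Q N * (1 - Q^Suc N)"
  by (simp add: poch_def prod.atLeast1_atMost_eq atLeastAtMostSuc_conv mult.commute)

lemma gb_zero: "N < k \<Longrightarrow> gb Q N k = 0"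
  by (induction N arbitrary: k) auto

lemma ring_aux1: "(u::'a::comm_ring_1) * (1 - a) + (a * u - b * u) = u * (1 - b)"
  by (simp add: algebra_simps)

lemma gb_0[simp]: "gb Q N 0 = 1"
  by (cases N) auto

lemma gb_prod: "k \<le> N \<Longrightarrow> gb Q N k * poch Q k * poch Q (N - k) = poch Q N"
proof (induction N arbitrary: k)
  case 0 then show ?case by simp
next
  case (Suc N)
  show ?case
  proof (cases k)
    case 0 then show ?thesis by simp
  next
    case (Suc k')
    have A: "gb Q N k' * poch Q k' * poch Q (N - k') = poch Q N"
      using Suc.IH[of k'] Suc.prems Suc by simp
    have e1: "Suc N - Suc k' = N - k'" by simp
    have t1: "gb Q N k' * poch Q k * poch Q (Suc N - k) = poch Q N * (1 - Q^k)"
    proof -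
      have "gb Q N k' * poch Q k * poch Q (Suc N - k) = (gb Q N k' * poch Q k' * poch Q (N - k')) * (1 - Q^k)"
        unfolding Suc e1 poch_Suc by (simp only: mult_ac)
      thus ?thesis unfolding A Suc .
    qed
    have t2: "Q^k * gb Q N k * poch Q k * poch Q (Suc N - k) = Q^k * poch Q N - Q^(Suc N) * poch Q N"
    proof (cases "k \<le> N")
      case True
      have B: "gb Q N k * poch Q k * poch Q (N - k) = poch Q N" using Suc.IH True by simp
      have e2: "Suc N - k = Suc (N - k)" using True by simp
      have e4: "k + Suc (N - k) = Suc N" using True by simp
      have e3: "Q^k * Q^(Suc (N-k)) = Q^(Suc N)" using e4 by (metis power_add)
      have "Q^k * gb Q N k * poch Q k * poch Q (Suc N - k) = Q^k * (gb Q N k * poch Q k * poch Q (N - k)) * (1 - Q^Suc (N - k))"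
        unfolding e2 poch_Suc by (simp only: mult_ac)
      also have "\<dots> = Q^k * poch Q N - (Q^k * Q^(Suc (N-k))) * poch Q N"
        unfolding B by (simp only: right_diff_distrib mult_ac mult_1_right mult_1_left)
      finally show ?thesis unfolding e3 .
    next
      case False
      hence "k = Suc N" using Suc.prems by simp
      thus ?thesis by (simp add: gb_zero)
    qed
    have "gb Q (Suc N) k = gb Q N k' + Q^k * gb Q N k" using Suc by simp
    hence "gb Q (Suc N) k * poch Q k * poch Q (Suc N - k)
         = gb Q N k' * poch Q k * poch Q (Suc N - k) + Q^k * gb Q N k * poch Q k * poch Q (Suc N - k)"
      by (simp only: distrib_right mult.assoc)
    also have "\<dots> = poch Q N * (1 - Q^(Suc N))" unfolding t1 t2
      by (rule ring_aux1)
    finally show ?thesis by (simp add: poch_Suc)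
  qed
qed

lemma poch_nth0: "Q $ 0 = 0 \<Longrightarrow> poch Q N $ 0 = 1"
  by (induction N) (simp_all add: poch_Suc)

lemma poch_nz: "Q $ 0 = 0 \<Longrightarrow> poch Q N \<noteq> 0"
proof
  assume "Q $ 0 = 0" "poch Q N = 0"
  then have "poch Q N $ 0 = 0" by simp
  with poch_nth0[OF \<open>Q $ 0 = 0\<close>] show False by simp
qed

lemma gb_sym:
  assumes "Q $ 0 = 0" "k \<le> N"
  shows "gb Q N (N - k) = gb Q N k"
proof -
  have "gb Q N (N - k) * poch Q (N - k) * poch Q (N - (N - k)) = poch Q N"
    using gb_prod[of "N-k" N Q] by simp
  also have "\<dots> = gb Q N k * poch Q k * poch Q (N - k)" using gb_prod[OF assms(2)] by simp
  finally have "gb Q N (N - k) * (poch Q (N - k) * poch Q k) = gb Q N k * (poch Q (N - k) * poch Q k)"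
    using assms(2) by (simp add: algebra_simps)
  moreover have "poch Q (N - k) * poch Q k \<noteq> 0" using poch_nz[OF assms(1)] by simp
  ultimately show ?thesis by simp
qed

lemma gb_pascal2:
  assumes "Q $ 0 = 0" "1 \<le> k" "k \<le> Suc N"
  shows "gb Q (Suc N) k = Q^(Suc N - k) * gb Q N (k - 1) + gb Q N k"
proof (cases "k = Suc N")
  case True
  then show ?thesis by (simp add: gb_zero)
next
  case False
  hence kN: "k \<le> N" using assms by simp
  have "gb Q (Suc N) k = gb Q (Suc N) (Suc N - k)" using gb_sym[OF assms(1) assms(3)] by simp
  also have "\<dots> = gb Q N (N - k) + Q^(Suc N - k) * gb Q N (Suc N - k)"
    using kN by (simp add: Suc_diff_le)
  also have "gb Q N (N - k) = gb Q N k" using gb_sym[OF assms(1) kN] .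
  also have "gb Q N (Suc N - k) = gb Q N (N - (k - 1))" using assms by simp
  also have "\<dots> = gb Q N (k - 1)" using gb_sym[OF assms(1), of "k-1" N] kN by simp
  finally show ?thesis by (simp add: algebra_simps)
qed

definition G :: "rf \<Rightarrow> nat \<Rightarrow> int \<Rightarrow> rf" where
  "G Q N k = (if k < 0 then 0 else gb Q N (nat k))"

lemma G_out: "k < 0 \<or> int N < k \<Longrightarrow> G Q N k = 0"
  by (auto simp: G_def gb_zero)

lemma G_sym: "Q $ 0 = 0 \<Longrightarrow> G Q N (int N - k) = G Q N k"
proof -
  assume Q: "Q $ 0 = 0"
  show ?thesis
  proof (cases "0 \<le> k \<and> k \<le> int N")
    case True
    then obtain m where m: "k = int m" "m \<le> N" by (metis nonneg_int_cases of_nat_le_iff)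
    have e: "nat (int N - int m) = N - m" using m by simp
    have "\<not> int N - k < 0" using m by simp
    then show ?thesis using gb_sym[OF Q m(2)] m by (simp add: G_def e)
  next
    case False
    then show ?thesis by (auto simp: G_out)
  qed
qed

lemma G_p1: "G Q (Suc N) (k + 1) = G Q N k + Q^(nat (k + 1)) * G Q N (k + 1)"
proof (cases "k < -1")
  case True then show ?thesis by (simp add: G_def)
next
  case False
  show ?thesis
  proof (cases "k = -1")
    case True then show ?thesis by (simp add: G_def)
  next
    case False
    with \<open>\<not> k < -1\<close> have "0 \<le> k" by simp
    then obtain m where m: "k = int m" by (metis nonneg_int_cases)
    have "nat (k + 1) = Suc m" using m by simp
    then show ?thesis using m by (simp add: G_def)
  qed
qed

lemma G_p2:
  assumes "Q $ 0 = 0"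
  shows "G Q (Suc N) k = Q^(nat (int (Suc N) - k)) * G Q N (k - 1) + G Q N k"
proof (cases "k \<le> 0")
  case True
  show ?thesis
  proof (cases "k = 0")
    case True
    have a: "G Q N (k - 1) = 0" using True by (simp add: G_def)
    have b: "G Q (Suc N) k = 1" "G Q N k = 1" using True by (simp_all add: G_def)
    show ?thesis unfolding a b by (simp only: mult_zero_right add_0_left)
  next
    case False
    hence "k < 0" using \<open>k \<le> 0\<close> by simp
    hence a: "G Q N (k - 1) = 0" "G Q (Suc N) k = 0" "G Q N k = 0" by (simp_all add: G_def)
    show ?thesis unfolding a by (simp only: mult_zero_right add_0_right)
  qed
next
  case False
  show ?thesis
  proof (cases "k \<le> int (Suc N)")
    case True
    define m where "m = nat k"
    have m: "k = int m" "1 \<le> m" "m \<le> Suc N" using False True unfolding m_def by linarith+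
    have e: "nat (int (Suc N) - k) = Suc N - m" using m by simp
    have g1: "G Q (Suc N) k = gb Q (Suc N) m" using m by (simp add: G_def)
    have g2: "G Q N k = gb Q N m" using m by (simp add: G_def)
    have e2: "nat (k - 1) = m - 1" using m by simp
    have g3: "G Q N (k - 1) = gb Q N (m - 1)" using m unfolding G_def e2 by simp
    show ?thesis unfolding e g1 g2 g3 by (rule gb_pascal2[OF assms m(2) m(3)])
  next
    case False
    then show ?thesis by (simp add: G_out)
  qed
qed

lemma G_star:
  assumes "Q $ 0 = 0"
  shows "G Q (Suc (Suc N)) (k + 1) = G Q N k * (1 + Q^(Suc N))
     + Q^(nat (int (Suc N) - k)) * G Q N (k - 1) + Q^(nat (k + 1)) * G Q N (k + 1)"
proof -
  have a: "G Q (Suc (Suc N)) (k + 1) = G Q (Suc N) k + Q^(nat (k + 1)) * G Q (Suc N) (k + 1)"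
    by (rule G_p1)
  have b: "G Q (Suc N) k = Q^(nat (int (Suc N) - k)) * G Q N (k - 1) + G Q N k"
    using G_p2[OF assms, of N k] .
  have c: "G Q (Suc N) (k + 1) = Q^(nat (int N - k)) * G Q N k + G Q N (k + 1)"
    using G_p2[OF assms, of N "k+1"] by simp
  have d: "Q^(nat (k + 1)) * (Q^(nat (int N - k)) * G Q N k) = Q^(Suc N) * G Q N k"
  proof (cases "0 \<le> k \<and> k \<le> int N")
    case True
    hence "nat (k + 1) + nat (int N - k) = Suc N" by linarith
    then show ?thesis by (metis mult.assoc power_add)
  next
    case False
    then show ?thesis by (auto simp: G_out)
  qed
  have "G Q (Suc (Suc N)) (k + 1) = Q^(nat (int (Suc N) - k)) * G Q N (k - 1) + G Q N k
      + Q^(nat (k + 1)) * (Q^(nat (int N - k)) * G Q N k) + Q^(nat (k + 1)) * G Q N (k + 1)"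
    unfolding a b c by (simp only: distrib_left add.assoc)
  also have "\<dots> = G Q N k * (1 + Q^(Suc N))
     + Q^(nat (int (Suc N) - k)) * G Q N (k - 1) + Q^(nat (k + 1)) * G Q N (k + 1)"
    unfolding d by (simp only: distrib_left mult_1_right mult_1_left add_ac mult.commute)
  finally show ?thesis .
qed



definition sg :: "int \<Rightarrow> rf" where "sg j = (if even j then 1 else -1)"

definition ejt :: "nat \<Rightarrow> nat \<Rightarrow> int \<Rightarrow> nat" where
  "ejt a b j = nat (int a * j * j + int b * j)"

lemma ejt_nonneg: "b \<le> a \<Longrightarrow> 0 \<le> int a * j * j + int b * j"
proof (cases "0 \<le> j")
  case True then show ?thesis by simp
next
  case False
  assume ba: "b \<le> a"
  have "int a * j * j + int b * j = j * (int a * j + int b)" by (simp add: algebra_simps)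
  moreover have "int a * j + int b \<le> 0"
  proof -
    have "int a * j \<le> int a * (-1)" using False by (intro mult_left_mono) auto
    thus ?thesis using ba by simp
  qed
  ultimately show ?thesis using False by (simp add: mult_nonpos_nonpos)
qed

lemma int_ejt: "b \<le> a \<Longrightarrow> int (ejt a b j) = int a * j * j + int b * j"
  using ejt_nonneg by (simp add: ejt_def)

lemma sg_m1: "sg (j - 1) = - sg j" by (simp add: sg_def)
lemma sg_p1: "sg (j + 1) = - sg j" by (simp add: sg_def)

lemma sum_shift_int: "(\<Sum>i\<in>{a..b}. g i) = (\<Sum>j\<in>{a+c..b+c}. g (j - c))" for a b c :: int
  by (rule sum.reindex_bij_witness[where i="\<lambda>j. j - c" and j="\<lambda>i. i + c"]) auto

lemma ring_aux2: "(l::'a::comm_ring_1) * ((1 - u) * (1 - v)) = l * (1 + u * v) + (- l * v) + (- l * u)"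
  by (simp add: algebra_simps)

lemma ring_aux3: "(A::'a::comm_ring_1) * B = C * D \<Longrightarrow> - (- s * A) * B * g = s * C * (D * g)"
  by (metis minus_minus minus_mult_left mult.assoc mult.left_commute)

definition LJ :: "rf \<Rightarrow> nat \<Rightarrow> nat \<Rightarrow> nat \<Rightarrow> rf" where
  "LJ x a b n = (\<Sum>j\<in>{-int n..int n}. sg j * x^(ejt a b j) * G (x^(2*a)) (2*n) (int n + j))"

definition RJ :: "rf \<Rightarrow> nat \<Rightarrow> nat \<Rightarrow> nat \<Rightarrow> rf" where
  "RJ x a b n = (\<Prod>i<n. (1 - x^(a - b + 2*a*i)) * (1 - x^(a + b + 2*a*i)))"

lemma jtp_step:
  assumes x0: "x $ 0 = 0" and ba: "b \<le> a" and a1: "1 \<le> a"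
  shows "LJ x a b (Suc n) = LJ x a b n * ((1 - x^(a - b + 2*a*n)) * (1 - x^(a + b + 2*a*n)))"
proof -
  define Q where "Q = x^(2*a)"
  have Q0: "Q $ 0 = 0" unfolding Q_def fps_nth_power_0 x0 using a1 by simp
  define f where "f j = sg j * x^(ejt a b j)" for j
  define I where "I = {-int n..int n}"
  define J where "J = {-int n - 1..int n + 1}"
  define \<alpha> where "\<alpha> = a - b + 2*a*n"
  define \<beta> where "\<beta> = a + b + 2*a*n"
  have LJn: "LJ x a b n = (\<Sum>j\<in>I. f j * G Q (2*n) (int n + j))"
    unfolding LJ_def I_def f_def Q_def ..
  have ab: "x^\<alpha> * x^\<beta> = Q^(Suc (2*n))"
  proof -
    have "\<alpha> + \<beta> = 2 * a * Suc (2 * n)" unfolding \<alpha>_def \<beta>_def using ba by (simp add: algebra_simps)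
    thus ?thesis unfolding Q_def by (simp add: power_add[symmetric] power_mult[symmetric])
  qed
  have IJ: "I \<subseteq> J" unfolding I_def J_def by auto
  have P1: "LJ x a b n * (1 + x^\<alpha> * x^\<beta>) = (\<Sum>j\<in>J. f j * (G Q (2*n) (int n + j) * (1 + Q^(Suc (2*n)))))"
  proof -
    have "LJ x a b n * (1 + x^\<alpha> * x^\<beta>) = (\<Sum>j\<in>I. f j * (G Q (2*n) (int n + j) * (1 + Q^(Suc (2*n)))))"
      unfolding LJn ab sum_distrib_right by (simp only: mult.assoc)
    also have "\<dots> = (\<Sum>j\<in>J. f j * (G Q (2*n) (int n + j) * (1 + Q^(Suc (2*n)))))"
    proof (rule sum.mono_neutral_left)
      show "finite J" unfolding J_def by simp
      show "I \<subseteq> J" by (rule IJ)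
      show "\<forall>j\<in>J - I. f j * (G Q (2*n) (int n + j) * (1 + Q^(Suc (2*n)))) = 0"
      proof
        fix j assume "j \<in> J - I"
        hence "int n + j < 0 \<or> int (2*n) < int n + j" unfolding I_def J_def by auto
        thus "f j * (G Q (2*n) (int n + j) * (1 + Q^(Suc (2*n)))) = 0" by (simp add: G_out)
      qed
    qed
    finally show ?thesis .
  qed
  have P2: "- LJ x a b n * x^\<beta> = (\<Sum>j\<in>J. f j * (Q^(nat (int n + 1 - j)) * G Q (2*n) (int n + j - 1)))"
  proof -
    have "- LJ x a b n * x^\<beta> = (\<Sum>i\<in>I. - f i * x^\<beta> * G Q (2*n) (int n + i))"
      unfolding LJn sum_distrib_right sum_negf[symmetric] by (simp only: mult_ac minus_mult_left)
    also have "\<dots> = (\<Sum>j\<in>{-int n + 1..int n + 1}. - f (j - 1) * x^\<beta> * G Q (2*n) (int n + (j - 1)))"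
      unfolding I_def by (rule sum_shift_int)
    also have "\<dots> = (\<Sum>j\<in>{-int n + 1..int n + 1}. f j * (Q^(nat (int n + 1 - j)) * G Q (2*n) (int n + j - 1)))"
    proof (rule sum.cong[OF refl])
      fix j assume j: "j \<in> {-int n + 1..int n + 1}"
      have e: "ejt a b (j - 1) + \<beta> = ejt a b j + 2 * a * nat (int n + 1 - j)"
      proof -
        have "int (ejt a b (j - 1) + \<beta>) = int (ejt a b j + 2 * a * nat (int n + 1 - j))"
          using j ba unfolding \<beta>_def by (simp add: int_ejt algebra_simps)
        thus ?thesis by (simp only: of_nat_eq_iff)
      qed
      have hx: "x^(ejt a b (j - 1)) * x^\<beta> = x^(ejt a b j) * Q^(nat (int n + 1 - j))"
        unfolding Q_def power_add[symmetric] power_mult[symmetric] e ..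
      have g: "int n + (j - 1) = int n + j - 1" by simp
      show "- f (j - 1) * x^\<beta> * G Q (2*n) (int n + (j - 1)) = f j * (Q^(nat (int n + 1 - j)) * G Q (2*n) (int n + j - 1))"
        unfolding f_def sg_m1 g by (rule ring_aux3[OF hx])
    qed
    also have "\<dots> = (\<Sum>j\<in>J. f j * (Q^(nat (int n + 1 - j)) * G Q (2*n) (int n + j - 1)))"
    proof (rule sum.mono_neutral_left)
      show "finite J" unfolding J_def by simp
      show "{-int n + 1..int n + 1} \<subseteq> J" unfolding J_def by auto
      show "\<forall>j\<in>J - {-int n + 1..int n + 1}. f j * (Q^(nat (int n + 1 - j)) * G Q (2*n) (int n + j - 1)) = 0"
      proof
        fix j assume "j \<in> J - {-int n + 1..int n + 1}"
        hence "int n + j - 1 < 0" unfolding J_def by auto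
        thus "f j * (Q^(nat (int n + 1 - j)) * G Q (2*n) (int n + j - 1)) = 0" by (simp add: G_out)
      qed
    qed
    finally show ?thesis .
  qed
  have P3: "- LJ x a b n * x^\<alpha> = (\<Sum>j\<in>J. f j * (Q^(nat (int n + j + 1)) * G Q (2*n) (int n + j + 1)))"
  proof -
    have "- LJ x a b n * x^\<alpha> = (\<Sum>i\<in>I. - f i * x^\<alpha> * G Q (2*n) (int n + i))"
      unfolding LJn sum_distrib_right sum_negf[symmetric] by (simp only: mult_ac minus_mult_left)
    also have "\<dots> = (\<Sum>j\<in>{-int n + -1..int n + -1}. - f (j - -1) * x^\<alpha> * G Q (2*n) (int n + (j - -1)))"
      unfolding I_def by (rule sum_shift_int)
    also have "\<dots> = (\<Sum>j\<in>{-int n + -1..int n + -1}. f j * (Q^(nat (int n + j + 1)) * G Q (2*n) (int n + j + 1)))"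
    proof (rule sum.cong[OF refl])
      fix j assume j: "j \<in> {-int n + -1..int n + -1}"
      have e: "ejt a b (j + 1) + \<alpha> = ejt a b j + 2 * a * nat (int n + j + 1)"
      proof -
        have "int (ejt a b (j + 1) + \<alpha>) = int (ejt a b j + 2 * a * nat (int n + j + 1))"
          using j ba unfolding \<alpha>_def by (simp add: int_ejt algebra_simps of_nat_diff)
        thus ?thesis by (simp only: of_nat_eq_iff)
      qed
      have hx: "x^(ejt a b (j + 1)) * x^\<alpha> = x^(ejt a b j) * Q^(nat (int n + j + 1))"
        unfolding Q_def power_add[symmetric] power_mult[symmetric] e ..
      have g: "int n + (j - -1) = int n + j + 1" "j - -1 = j + 1" "int n + (j + 1) = int n + j + 1" by simp_all
      show "- f (j - -1) * x^\<alpha> * G Q (2*n) (int n + (j - -1)) = f j * (Q^(nat (int n + j + 1)) * G Q (2*n) (int n + j + 1))"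
        unfolding f_def g sg_p1 by (rule ring_aux3[OF hx])
    qed
    also have "\<dots> = (\<Sum>j\<in>J. f j * (Q^(nat (int n + j + 1)) * G Q (2*n) (int n + j + 1)))"
    proof (rule sum.mono_neutral_left)
      show "finite J" unfolding J_def by simp
      show "{-int n + -1..int n + -1} \<subseteq> J" unfolding J_def by auto
      show "\<forall>j\<in>J - {-int n + -1..int n + -1}. f j * (Q^(nat (int n + j + 1)) * G Q (2*n) (int n + j + 1)) = 0"
      proof
        fix j assume "j \<in> J - {-int n + -1..int n + -1}"
        hence "int (2*n) < int n + j + 1" unfolding J_def by auto
        thus "f j * (Q^(nat (int n + j + 1)) * G Q (2*n) (int n + j + 1)) = 0" by (simp add: G_out)
      qed
    qed
    finally show ?thesis .
  qed
  have "LJ x a b n * ((1 - x^\<alpha>) * (1 - x^\<beta>)) = LJ x a b n * (1 + x^\<alpha> * x^\<beta>) + (- LJ x a b n * x^\<beta>) + (- LJ x a b n * x^\<alpha>)"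
    by (rule ring_aux2)
  also have "\<dots> = (\<Sum>j\<in>J. f j * (G Q (2*n) (int n + j) * (1 + Q^(Suc (2*n)))
        + Q^(nat (int n + 1 - j)) * G Q (2*n) (int n + j - 1) + Q^(nat (int n + j + 1)) * G Q (2*n) (int n + j + 1)))"
    unfolding P1 P2 P3 sum.distrib[symmetric] by (simp only: distrib_left)
  also have "\<dots> = (\<Sum>j\<in>J. f j * G Q (2*Suc n) (int (Suc n) + j))"
  proof (rule sum.cong[OF refl])
    fix j
    have s: "G Q (Suc (Suc (2*n))) (int n + j + 1) = G Q (2*n) (int n + j) * (1 + Q^(Suc (2*n)))
     + Q^(nat (int (Suc (2*n)) - (int n + j))) * G Q (2*n) (int n + j - 1) + Q^(nat (int n + j + 1)) * G Q (2*n) (int n + j + 1)"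
      using G_star[OF Q0, of "2*n" "int n + j"] by simp
    have e1: "int (Suc (2*n)) - (int n + j) = int n + 1 - j" by simp
    have e2: "2 * Suc n = Suc (Suc (2*n))" by simp
    have e3: "int (Suc n) + j = int n + j + 1" by simp
    show "f j * (G Q (2*n) (int n + j) * (1 + Q^(Suc (2*n)))
        + Q^(nat (int n + 1 - j)) * G Q (2*n) (int n + j - 1) + Q^(nat (int n + j + 1)) * G Q (2*n) (int n + j + 1))
        = f j * G Q (2*Suc n) (int (Suc n) + j)"
      unfolding e2 e3 s e1 ..
  qed
  also have "\<dots> = LJ x a b (Suc n)"
  proof -
    have Jeq: "J = {-int (Suc n)..int (Suc n)}" unfolding J_def by (simp add: algebra_simps)
    show ?thesis unfolding LJ_def Jeq f_def Q_def by (simp only: mult.assoc)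
  qed
  finally show ?thesis unfolding \<alpha>_def \<beta>_def by simp
qed

lemma jtp:
  assumes x0: "x $ 0 = 0" and ba: "b \<le> a" and a1: "1 \<le> a"
  shows "LJ x a b n = RJ x a b n"
proof (induction n)
  case 0
  then show ?case by (simp add: LJ_def RJ_def G_def sg_def ejt_def)
next
  case (Suc n)
  then show ?case using jtp_step[OF assms, of n] by (simp add: RJ_def)
qed



lemma finite_partitions: "finite (partitions n)"
proof -
  have "partitions n \<subseteq> {xs. set xs \<subseteq> {..n} \<and> length xs \<le> n}"
  proof
    fix xs assume "xs \<in> partitions n"
    hence h: "0 \<notin> set xs" "sum_list xs = n" by (auto simp: partitions_def)
    have "set xs \<subseteq> {..n}" using h member_le_sum_list by fastforce
    moreover have "length xs \<le> sum_list xs" using h(1)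
      by (induction xs) (auto simp: Suc_le_eq)
    ultimately show "xs \<in> {xs. set xs \<subseteq> {..n} \<and> length xs \<le> n}" using h by simp
  qed
  moreover have "finite {xs. set xs \<subseteq> {..n} \<and> length xs \<le> n}"
    by (rule finite_lists_length_le) simp
  ultimately show ?thesis by (rule finite_subset)
qed

definition PS :: "nat \<Rightarrow> nat \<Rightarrow> int \<Rightarrow> nat list set" where
  "PS M N c = {p \<in> partitions N. (\<forall>x\<in>set p. x \<le> M) \<and> dd p = c}"

lemma finite_PS: "finite (PS M N c)"
  unfolding PS_def using finite_partitions by simp

definition epsm :: "nat \<Rightarrow> int" where "epsm m = (if odd m then 1 else 0)"

lemma PS_rec:
  fixes M N :: nat and c :: int
  defines "m \<equiv> Suc M"
  shows "card (PS m N c) = card (PS M N c)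
     + (if m \<le> N then card (PS M (N - m) (epsm m - c)) else 0)
     + (if 2 * m \<le> N then card (PS m (N - 2 * m) c) else 0)"
proof -
  define A1 where "A1 = (if m \<le> N then (\<lambda>l. m # l) ` PS M (N - m) (epsm m - c) else {})"
  define A2 where "A2 = (if 2 * m \<le> N then (\<lambda>l. m # m # l) ` PS m (N - 2 * m) c else {})"
  have split: "PS m N c = PS M N c \<union> A1 \<union> A2"
  proof (intro equalityI subsetI)
    fix p assume p: "p \<in> PS m N c"
    hence ps: "sorted_wrt (\<ge>) p" "0 \<notin> set p" "sum_list p = N" "\<forall>x\<in>set p. x \<le> m" "dd p = c"
      by (auto simp: PS_def partitions_def)
    show "p \<in> PS M N c \<union> A1 \<union> A2"
    proof (cases "m \<in> set p")
      case False
      hence "\<forall>x\<in>set p. x \<le> M" using ps(4) unfolding m_def by (metis le_SucE)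
      thus ?thesis using ps by (simp add: PS_def partitions_def)
    next
      case True
      then obtain y l where pl: "p = y # l" by (cases p) auto
      have ym: "y = m"
      proof -
        have "y \<le> m" using ps(4) pl by simp
        moreover have "m \<le> y" using True ps(1) pl by auto
        ultimately show ?thesis by simp
      qed
      have l1: "sorted_wrt (\<ge>) l" "0 \<notin> set l" "\<forall>x\<in>set l. x \<le> m" using ps pl by auto
      have sl: "sum_list l + m = N" using ps(3) pl ym by simp
      show ?thesis
      proof (cases "m \<in> set l")
        case False
        have "\<forall>x\<in>set l. x \<le> M" using l1(3) False unfolding m_def by (metis le_SucE)
        moreover have "dd l = epsm m - c" using ps(5) pl ym by (simp add: epsm_def)
        ultimately have "l \<in> PS M (N - m) (epsm m - c)" using l1 sl by (simp add: PS_def partitions_def)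
        moreover have "m \<le> N" using sl by simp
        ultimately have "p \<in> A1" unfolding A1_def using pl ym by simp
        thus ?thesis by simp
      next
        case True
        then obtain z l' where ll: "l = z # l'" by (cases l) auto
        have zm: "z = m"
        proof -
          have "z \<le> m" using l1(3) ll by simp
          moreover have "m \<le> z" using True l1(1) ll by auto
          ultimately show ?thesis by simp
        qed
        have l2: "sorted_wrt (\<ge>) l'" "0 \<notin> set l'" "\<forall>x\<in>set l'. x \<le> m" using l1 ll by auto
        have sl2: "sum_list l' + 2 * m = N" using sl ll zm by simp
        have "dd l' = c" using ps(5) pl ym ll zm by simp
        hence "l' \<in> PS m (N - 2 * m) c" using l2 sl2 by (simp add: PS_def partitions_def)
        moreover have "2 * m \<le> N" using sl2 by simp
        ultimately have "p \<in> A2" unfolding A2_def using pl ym ll zm by simp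
        thus ?thesis by simp
      qed
    qed
  next
    fix p assume "p \<in> PS M N c \<union> A1 \<union> A2"
    then consider (a) "p \<in> PS M N c" | (b) "p \<in> A1" | (c) "p \<in> A2" by blast
    thus "p \<in> PS m N c"
    proof cases
      case a thus ?thesis unfolding m_def by (auto simp: PS_def)
    next
      case b
      then obtain l where l: "m \<le> N" "l \<in> PS M (N - m) (epsm m - c)" "p = m # l"
        unfolding A1_def by (auto split: if_splits)
      have "\<forall>x\<in>set l. x \<le> m" using l(2) unfolding m_def PS_def by auto
      thus ?thesis using l unfolding PS_def partitions_def m_def epsm_def by auto
    next
      case c
      then obtain l where l: "2 * m \<le> N" "l \<in> PS m (N - 2 * m) c" "p = m # m # l"
        unfolding A2_def by (auto split: if_splits)
      thus ?thesis using l unfolding PS_def partitions_def m_def by auto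
    qed
  qed
  have hA1: "\<exists>l. p = m # l \<and> (\<forall>x\<in>set l. x \<le> M)" if "p \<in> A1" for p
    using that unfolding A1_def PS_def by (auto split: if_splits)
  have hA2: "\<exists>l. p = m # m # l" if "p \<in> A2" for p
    using that unfolding A2_def by (auto split: if_splits)
  have hA0: "\<forall>x\<in>set p. x \<le> M" if "p \<in> PS M N c" for p
    using that unfolding PS_def by simp
  have d1: "PS M N c \<inter> A1 = {}"
  proof -
    { fix p assume p: "p \<in> PS M N c" "p \<in> A1"
      then obtain l where "p = m # l" using hA1 by blast
      hence False using hA0[OF p(1)] unfolding m_def by simp }
    thus ?thesis by blast
  qed
  have d2: "(PS M N c \<union> A1) \<inter> A2 = {}"
  proof -
    { fix p assume p: "p \<in> PS M N c \<union> A1" "p \<in> A2"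
      then obtain l where l: "p = m # m # l" using hA2 by blast
      have False
      proof (cases "p \<in> PS M N c")
        case True thus False using hA0[OF True] l unfolding m_def by simp
      next
        case False
        hence "p \<in> A1" using p by blast
        then obtain l' where l': "p = m # l'" "\<forall>x\<in>set l'. x \<le> M" using hA1 by blast
        hence "l' = m # l" using l by simp
        thus False using l'(2) unfolding m_def by simp
      qed }
    thus ?thesis by blast
  qed
  have fA1: "finite A1" unfolding A1_def using finite_PS by simp
  have fA2: "finite A2" unfolding A2_def using finite_PS by simp
  have c1: "card A1 = (if m \<le> N then card (PS M (N - m) (epsm m - c)) else 0)"
    unfolding A1_def by (simp add: card_image inj_on_def)
  have c2: "card A2 = (if 2 * m \<le> N then card (PS m (N - 2 * m) c) else 0)"
    unfolding A2_def by (simp add: card_image inj_on_def)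
  have "card (PS m N c) = card (PS M N c \<union> A1) + card A2"
    unfolding split using d2 fA1 fA2 finite_PS by (simp add: card_Un_disjoint)
  also have "card (PS M N c \<union> A1) = card (PS M N c) + card A1"
    using d1 fA1 finite_PS by (simp add: card_Un_disjoint)
  finally show ?thesis unfolding c1 c2 .
qed



definition Pser :: "nat \<Rightarrow> int \<Rightarrow> rf" where
  "Pser M c = Abs_fps (\<lambda>N. real (card (PS M N c)))"

lemma one_minus_X_mult_nth: "((1 - fps_X^k) * (f::rf)) $ N = f $ N - (if N < k then 0 else f $ (N - k))"
proof -
  have "(1 - fps_X^k) * f = f - fps_X^k * f" by (simp add: left_diff_distrib)
  thus ?thesis by (simp add: fps_X_power_mult_nth)
qed

lemma Pser_rec:
  "(1 - fps_X^(2 * Suc M)) * Pser (Suc M) c = Pser M c + fps_X^(Suc M) * Pser M (epsm (Suc M) - c)"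
proof (rule fps_ext)
  fix N
  show "((1 - fps_X^(2 * Suc M)) * Pser (Suc M) c) $ N = (Pser M c + fps_X^(Suc M) * Pser M (epsm (Suc M) - c)) $ N"
    unfolding one_minus_X_mult_nth fps_add_nth fps_X_power_mult_nth Pser_def fps_nth_Abs_fps
    using PS_rec[of M N c] by (auto simp: not_less)
qed

definition Tn :: "int \<Rightarrow> nat" where "Tn c = nat (2 * c * c - c)"

lemma Tn_nonneg: "0 \<le> 2 * c * c - c" for c :: int
proof (cases "0 \<le> c")
  case True
  show ?thesis
  proof (cases "c = 0")
    case False
    hence "1 \<le> c" using True by simp
    hence "c \<le> c * c" by (simp add: mult_le_cancel_left1)
    moreover have "0 \<le> c * c" by simp
    moreover have "2 * c * c = c * c + c * c" by simp
    ultimately show ?thesis by linarith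
  qed simp
next
  case False
  have "0 \<le> c * c" by simp
  moreover have "2 * c * c = c * c + c * c" by simp
  ultimately show ?thesis using False by linarith
qed

lemma int_Tn: "int (Tn c) = 2 * c * c - c"
  using Tn_nonneg[of c] by (simp add: Tn_def)

lemma X2_pow: "(fps_X^2 :: rf)^k = fps_X^(2*k)"
  by (simp add: power_mult)

lemma X20: "((fps_X :: rf)^2) $ 0 = 0" by simp

lemma PS_0: "PS 0 N c = (if N = 0 \<and> c = 0 then {[]} else {})"
proof -
  have a: "p = []" if "p \<in> PS 0 N c" for p
    using that unfolding PS_def partitions_def by (cases p) auto
  have h: "p \<in> PS 0 N c \<longleftrightarrow> p = [] \<and> N = 0 \<and> c = 0" for p
  proof
    assume "p \<in> PS 0 N c"
    moreover from this have "p = []" by (rule a)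
    ultimately show "p = [] \<and> N = 0 \<and> c = 0" unfolding PS_def partitions_def by auto
  next
    assume "p = [] \<and> N = 0 \<and> c = 0"
    thus "p \<in> PS 0 N c" unfolding PS_def partitions_def by simp
  qed
  show ?thesis using h by auto
qed

lemma Pser_0: "Pser 0 c = (if c = 0 then 1 else 0)"
  by (rule fps_ext) (simp add: Pser_def PS_0)

lemma main_formula:
  "Pser M c * poch (fps_X^2) M = fps_X^(Tn c) * G (fps_X^2) M (int (M div 2) + c)"
proof (induction M arbitrary: c)
  case 0
  show ?case by (simp add: Pser_0 Tn_def G_def)
next
  case (Suc M)
  define Q :: rf where "Q = fps_X^2"
  have Q0: "Q $ 0 = 0" unfolding Q_def by simp
  define K where "K = M div 2"
  have "Pser (Suc M) c * poch Q (Suc M) = ((1 - fps_X^(2 * Suc M)) * Pser (Suc M) c) * poch Q M"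
    unfolding poch_Suc Q_def X2_pow by (simp only: mult_ac)
  also have "\<dots> = Pser M c * poch Q M + fps_X^(Suc M) * (Pser M (epsm (Suc M) - c) * poch Q M)"
    unfolding Pser_rec by (simp only: distrib_right mult.assoc)
  also have "\<dots> = fps_X^(Tn c) * G Q M (int K + c)
      + fps_X^(Suc M) * (fps_X^(Tn (epsm (Suc M) - c)) * G Q M (int K + (epsm (Suc M) - c)))"
    unfolding Suc.IH Q_def K_def ..
  also have "\<dots> = fps_X^(Tn c) * G Q (Suc M) (int (Suc M div 2) + c)"
  proof (cases "even M")
    case True
    have M: "M = 2 * K" using True unfolding K_def by simp
    have e: "epsm (Suc M) = 1" using True by (simp add: epsm_def)
    have K': "Suc M div 2 = K" using M by simp
    have g1: "G Q M (int K + (1 - c)) = G Q M (int K + c - 1)"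
    proof -
      have "G Q M (int K + (1 - c)) = G Q M (int M - (int K + (1 - c)))" using G_sym[OF Q0, of M "int K + (1 - c)"] by simp
      also have "int M - (int K + (1 - c)) = int K + c - 1" using M by simp
      finally show ?thesis .
    qed
    have p2: "G Q (Suc M) (int K + c) = Q^(nat (int (Suc M) - (int K + c))) * G Q M (int K + c - 1) + G Q M (int K + c)"
      by (rule G_p2[OF Q0])
    have e2: "int (Suc M) - (int K + c) = int K + 1 - c" using M by simp
    have key: "fps_X^(Suc M) * (fps_X^(Tn (1 - c)) * G Q M (int K + c - 1))
             = fps_X^(Tn c) * (Q^(nat (int K + 1 - c)) * G Q M (int K + c - 1))"
    proof (cases "0 \<le> int K + 1 - c")
      case True
      have "Suc M + Tn (1 - c) = Tn c + 2 * nat (int K + 1 - c)"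
      proof -
        have "int (Suc M + Tn (1 - c)) = int (Tn c + 2 * nat (int K + 1 - c))"
          using True M by (simp add: int_Tn algebra_simps)
        thus ?thesis by (simp only: of_nat_eq_iff)
      qed
      hence "fps_X^(Suc M) * fps_X^(Tn (1 - c)) = fps_X^(Tn c) * Q^(nat (int K + 1 - c))"
        unfolding Q_def X2_pow power_add[symmetric] by simp
      thus ?thesis by (simp only: mult.assoc[symmetric])
    next
      case False
      hence "G Q M (int K + c - 1) = 0" using M by (intro G_out) simp
      thus ?thesis by simp
    qed
    show ?thesis unfolding e K' g1 p2 e2 using key by (simp add: algebra_simps)
  next
    case False
    have M: "M = 2 * K + 1" using False unfolding K_def by simp
    have e: "epsm (Suc M) = 0" using False by (simp add: epsm_def)
    have K': "Suc M div 2 = K + 1" using M by simp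
    have g1: "G Q M (int K + (0 - c)) = G Q M (int K + c + 1)"
    proof -
      have "G Q M (int K + (0 - c)) = G Q M (int M - (int K + (0 - c)))" using G_sym[OF Q0, of M "int K + (0 - c)"] by simp
      also have "int M - (int K + (0 - c)) = int K + c + 1" using M by simp
      finally show ?thesis .
    qed
    have p1: "G Q (Suc M) (int K + c + 1) = G Q M (int K + c) + Q^(nat (int K + c + 1)) * G Q M (int K + c + 1)"
      by (rule G_p1)
    have e2: "int (K + 1) + c = int K + c + 1" by simp
    have key: "fps_X^(Suc M) * (fps_X^(Tn (0 - c)) * G Q M (int K + c + 1))
             = fps_X^(Tn c) * (Q^(nat (int K + c + 1)) * G Q M (int K + c + 1))"
    proof (cases "0 \<le> int K + c + 1")
      case True
      have "Suc M + Tn (0 - c) = Tn c + 2 * nat (int K + c + 1)"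
      proof -
        have "int (Suc M + Tn (0 - c)) = int (Tn c + 2 * nat (int K + c + 1))"
          using True M by (simp add: int_Tn algebra_simps)
        thus ?thesis by (simp only: of_nat_eq_iff)
      qed
      hence "fps_X^(Suc M) * fps_X^(Tn (0 - c)) = fps_X^(Tn c) * Q^(nat (int K + c + 1))"
        unfolding Q_def X2_pow power_add[symmetric] by simp
      thus ?thesis by (simp only: mult.assoc[symmetric])
    next
      case False
      hence "G Q M (int K + c + 1) = 0" by (intro G_out) simp
      thus ?thesis by simp
    qed
    show ?thesis unfolding e K' g1 e2 p1 using key by (simp add: algebra_simps)
  qed
  finally show ?case unfolding Q_def .
qed



definition eqD :: "nat \<Rightarrow> rf \<Rightarrow> rf \<Rightarrow> bool" where
  "eqD D f g \<longleftrightarrow> (\<forall>k\<le>D. f $ k = g $ k)"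

lemma eqD_refl[simp]: "eqD D f f" by (simp add: eqD_def)
lemma eqD_sym: "eqD D f g \<Longrightarrow> eqD D g f" by (simp add: eqD_def)
lemma eqD_trans: "eqD D f g \<Longrightarrow> eqD D g h \<Longrightarrow> eqD D f h" by (simp add: eqD_def)
lemma eqD_add: "eqD D f f' \<Longrightarrow> eqD D g g' \<Longrightarrow> eqD D (f + g) (f' + g')" by (simp add: eqD_def)
lemma eqD_mult: "eqD D f f' \<Longrightarrow> eqD D g g' \<Longrightarrow> eqD D (f * g) (f' * g')"
  unfolding eqD_def fps_mult_nth by (auto intro!: sum.cong)
lemma eqD_sum: "(\<And>i. i \<in> A \<Longrightarrow> eqD D (f i) (g i)) \<Longrightarrow> eqD D (sum f A) (sum g A)"
  unfolding eqD_def fps_sum_nth by (auto intro!: sum.cong)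
lemma eqD_Xpow: "(\<And>k. t + k \<le> D \<Longrightarrow> f $ k = g $ k) \<Longrightarrow> eqD D (fps_X^t * f) (fps_X^t * g)"
  unfolding eqD_def fps_X_power_mult_nth by auto
lemma eqD_Xpow_zero: "D < t \<Longrightarrow> eqD D (fps_X^t * f) 0"
  unfolding eqD_def fps_X_power_mult_nth by auto
lemma eqD_inverse:
  assumes "f $ 0 \<noteq> 0" "eqD D f g"
  shows "eqD D (inverse f) (inverse g)"
proof -
  have g0: "g $ 0 \<noteq> 0" using assms unfolding eqD_def by auto
  have "inverse f = inverse f * (g * inverse g)" using inverse_mult_eq_1'[OF g0] by simp
  also have "\<dots> = (inverse f * g) * inverse g" by (simp only: mult.assoc)
  finally have 1: "inverse f = (inverse f * g) * inverse g" .
  have "eqD D ((inverse f * g) * inverse g) ((inverse f * f) * inverse g)"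
    by (intro eqD_mult eqD_refl) (rule eqD_sym[OF assms(2)])
  also have "inverse f * f = 1" using inverse_mult_eq_1[OF assms(1)] .
  finally have 2: "eqD D ((inverse f * g) * inverse g) (inverse g)" by simp
  show ?thesis by (subst 1) (rule 2)
qed

lemma one_minus_Xpow_eqD: "D < m \<Longrightarrow> eqD D (1 - fps_X^m) 1"
  unfolding eqD_def by auto

lemma poch_Xs: "poch (fps_X^s) N = (\<Prod>i\<in>{1..N}. (1 - fps_X^(s*i)))"
  unfolding poch_def by (simp add: power_mult)

lemma poch_eqD_le:
  assumes "a \<le> b" "D < s * (a + 1)"
  shows "eqD D (poch (fps_X^s) b) (poch (fps_X^s) a)"
  using assms(1)
proof (induction b)
  case 0 then show ?case by simp
next
  case (Suc b)
  show ?case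
  proof (cases "a = Suc b")
    case True then show ?thesis by simp
  next
    case False
    hence ab: "a \<le> b" using Suc.prems by simp
    have "D < s * Suc b"
    proof -
      have "s * (a + 1) \<le> s * Suc b" using ab by simp
      thus ?thesis using assms(2) by linarith
    qed
    hence "eqD D (1 - (fps_X^s)^Suc b) 1" unfolding power_mult[symmetric] by (rule one_minus_Xpow_eqD)
    hence "eqD D (poch (fps_X^s) b * (1 - (fps_X^s)^Suc b)) (poch (fps_X^s) a * 1)"
      by (intro eqD_mult Suc.IH ab)
    thus ?thesis unfolding poch_Suc by simp
  qed
qed

lemma poch_X0: "1 \<le> s \<Longrightarrow> (fps_X^s :: rf) $ 0 = 0" by simp

lemma gb_lim:
  assumes s: "1 \<le> s" and kN: "k \<le> N" and D1: "D < s * (min k (N - k) + 1)" and D2: "D < s * (L + 1)"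
  shows "eqD D (gb (fps_X^s) N k) (inverse (poch (fps_X^s) L))"
proof -
  define Q :: rf where "Q = fps_X^s"
  have Q0: "Q $ 0 = 0" unfolding Q_def using s by simp
  define P where "P = poch Q L"
  have P0: "P $ 0 = 1" unfolding P_def by (rule poch_nth0[OF Q0])
  have eq: "eqD D (poch Q a) P" if "D < s * (min a L + 1)" for a
  proof (cases "a \<le> L")
    case True
    hence "D < s * (a + 1)" using that by simp
    thus ?thesis unfolding P_def Q_def by (intro eqD_sym[OF poch_eqD_le] True)
  next
    case False
    hence "D < s * (L + 1)" using that by simp
    thus ?thesis unfolding P_def Q_def using False by (intro poch_eqD_le) simp_all
  qed
  have aux: "D < s * (v + 1)" if "D < s * (u + 1)" "u \<le> v" for u v
  proof -
    have "s * (u + 1) \<le> s * (v + 1)" using that(2) by simp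
    thus ?thesis using that(1) by linarith
  qed
  have e1: "eqD D (poch Q k) P"
  proof (rule eq)
    show "D < s * (min k L + 1)"
    proof (cases "k \<le> L")
      case True thus ?thesis using aux[OF D1, of k] by (simp add: min_def)
    next
      case False thus ?thesis using D2 by (simp add: min_def)
    qed
  qed
  have e2: "eqD D (poch Q (N - k)) P"
  proof (rule eq)
    show "D < s * (min (N - k) L + 1)"
    proof (cases "N - k \<le> L")
      case True thus ?thesis using aux[OF D1, of "N - k"] by (simp add: min_def)
    next
      case False thus ?thesis using D2 by (simp add: min_def)
    qed
  qed
  have e3: "eqD D (poch Q N) P"
  proof (rule eq)
    show "D < s * (min N L + 1)"
    proof (cases "N \<le> L")
      case True
      have "min k (N - k) \<le> N" by simp
      thus ?thesis using aux[OF D1, of N] True by (simp add: min_def)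
    next
      case False thus ?thesis using D2 by (simp add: min_def)
    qed
  qed
  have "eqD D (gb Q N k * P * P) (gb Q N k * poch Q k * poch Q (N - k))"
    by (intro eqD_mult eqD_refl eqD_sym[OF e1] eqD_sym[OF e2])
  also have "gb Q N k * poch Q k * poch Q (N - k) = poch Q N" by (rule gb_prod[OF kN])
  finally have A: "eqD D (gb Q N k * P * P) P" using e3 by (rule eqD_trans)
  have iP: "P * inverse P = 1" using inverse_mult_eq_1'[of P] P0 by simp
  have "gb Q N k = gb Q N k * P * P * inverse P * inverse P"
    by (simp add: iP mult.assoc)
  also have "eqD D (gb Q N k * P * P * inverse P * inverse P) (P * inverse P * inverse P)"
    by (intro eqD_mult eqD_refl A)
  also have "P * inverse P * inverse P = inverse P" by (simp add: iP)
  finally show ?thesis unfolding P_def Q_def .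
qed

definition nonneg :: "rf \<Rightarrow> bool" where "nonneg f \<longleftrightarrow> (\<forall>k. 0 \<le> f $ k)"

lemma nonneg_mult: "nonneg f \<Longrightarrow> nonneg g \<Longrightarrow> nonneg (f * g)"
  unfolding nonneg_def fps_mult_nth by (auto intro!: sum_nonneg)
lemma nonneg_add: "nonneg f \<Longrightarrow> nonneg g \<Longrightarrow> nonneg (f + g)"
  unfolding nonneg_def by (auto intro: add_nonneg_nonneg)
lemma nonneg_one: "nonneg 1" unfolding nonneg_def by simp
lemma nonneg_X: "nonneg (fps_X ^ t)" unfolding nonneg_def by simp
lemma nonneg_prod: "(\<And>i. i \<in> A \<Longrightarrow> nonneg (f i)) \<Longrightarrow> nonneg (prod f A)"
  by (induction A rule: infinite_finite_induct) (auto intro: nonneg_mult nonneg_one)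

lemma mult_coeff_ge:
  assumes "nonneg f" "nonneg g" "i \<le> k"
  shows "f $ i * g $ (k - i) \<le> (f * g) $ k"
  unfolding fps_mult_nth
  using assms by (intro member_le_sum) (auto simp: nonneg_def)

lemma inv_one_minus_Xpow:
  assumes "1 \<le> m"
  shows "inverse (1 - fps_X^m :: rf) = Abs_fps (\<lambda>k. if m dvd k then 1 else 0)"
proof (rule fps_inverse_unique, rule fps_ext)
  fix k
  show "((1 - fps_X^m) * Abs_fps (\<lambda>k. if m dvd k then 1 else 0)) $ k = (1::rf) $ k"
    unfolding one_minus_X_mult_nth using assms
    by (cases "k = 0") (auto simp: not_less dvd_diff_nat le_imp_diff_is_add dvd_imp_le)
qed

lemma nonneg_inv: "1 \<le> m \<Longrightarrow> nonneg (inverse (1 - fps_X^m :: rf))"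
  unfolding nonneg_def using inv_one_minus_Xpow by simp



definition epsr :: "int \<Rightarrow> real" where
  "epsr c = (if c mod 4 \<in> {0, 1} then 1 else -1)"

lemma dd_bound: "\<bar>dd ys\<bar> \<le> int (length ys)"
  by (induction ys) auto

lemma length_le_sum: "0 \<notin> set ys \<Longrightarrow> length ys \<le> sum_list ys"
  by (induction ys) (auto simp: Suc_le_eq)

lemma step_A:
  assumes "n \<le> M"
  shows "(\<Sum>p\<in>partitions n. epsr (dd p)) = (\<Sum>c\<in>{-int n..int n}. fps_const (epsr c) * Pser M c) $ n"
proof -
  define P where "P = partitions n"
  have PS_eq: "PS M n c = {p \<in> P. dd p = c}" for c
  proof -
    have "\<forall>x\<in>set p. x \<le> M" if "p \<in> P" for p
    proof
      fix x assume "x \<in> set p"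
      hence "x \<le> sum_list p" by (rule member_le_sum_list) auto
      thus "x \<le> M" using that assms unfolding P_def partitions_def by simp
    qed
    thus ?thesis unfolding PS_def P_def by auto
  qed
  have img: "dd ` P \<subseteq> {-int n..int n}"
  proof
    fix c assume "c \<in> dd ` P"
    then obtain p where p: "p \<in> P" "c = dd p" by auto
    have "length p \<le> n" using p(1) length_le_sum unfolding P_def partitions_def by fastforce
    thus "c \<in> {-int n..int n}" using dd_bound[of p] p(2) by auto
  qed
  have "(\<Sum>c\<in>{-int n..int n}. fps_const (epsr c) * Pser M c) $ n
      = (\<Sum>c\<in>{-int n..int n}. epsr c * real (card {p \<in> P. dd p = c}))"
    unfolding fps_sum_nth fps_mult_left_const_nth Pser_def fps_nth_Abs_fps PS_eq ..
  also have "\<dots> = (\<Sum>c\<in>{-int n..int n}. (\<Sum>p\<in>{p \<in> P. dd p = c}. epsr (dd p)))"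
    by (intro sum.cong refl) simp
  also have "\<dots> = (\<Sum>p\<in>P. epsr (dd p))"
    by (rule sum.group) (use img finite_partitions P_def in auto)
  finally show ?thesis unfolding P_def ..
qed

lemma Tn_big:
  assumes "int n < \<bar>c\<bar>"
  shows "n < Tn c"
proof -
  have "\<bar>c\<bar> * 1 \<le> \<bar>c\<bar> * \<bar>c\<bar>" using assms by (intro mult_left_mono) auto
  hence cc: "\<bar>c\<bar> \<le> c * c" by (simp add: abs_mult_self_eq)
  have e: "2 * c * c = 2 * (c * c)" by simp
  have "int n < 2 * c * c - c" unfolding e using assms cc by (cases "0 \<le> c") linarith+
  thus ?thesis using int_Tn[of c] by linarith
qed

lemma split_even_odd:
  fixes g :: "int \<Rightarrow> rf"
  shows "(\<Sum>c\<in>{-2*R..2*R+1}. g c) = (\<Sum>j\<in>{-R..R}. g (-2*j) + g (2*j+1))"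
proof -
  have inj1: "inj_on (\<lambda>j. -2*j) {-R..R}" by (auto simp: inj_on_def)
  have inj2: "inj_on (\<lambda>j. 2*j+1) {-R..R}" by (auto simp: inj_on_def)
  have disj: "(\<lambda>j. -2*j) ` {-R..R} \<inter> (\<lambda>j. 2*j+1) ` {-R..R} = {}" by auto presburger
  have un: "{-2*R..2*R+1} = (\<lambda>j. -2*j) ` {-R..R} \<union> (\<lambda>j. 2*j+1) ` {-R..R}"
  proof (intro equalityI subsetI)
    fix c assume c: "c \<in> {-2*R..2*R+1}"
    show "c \<in> (\<lambda>j. -2*j) ` {-R..R} \<union> (\<lambda>j. 2*j+1) ` {-R..R}"
    proof (cases "even c")
      case True
      then obtain j where "c = 2 * j" by (rule evenE)
      hence "c = -2 * (-j)" "-j \<in> {-R..R}" using c by auto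
      thus ?thesis by blast
    next
      case False
      then obtain j where "c = 2 * j + 1" by (rule oddE)
      hence "c = 2 * j + 1" "j \<in> {-R..R}" using c by auto
      thus ?thesis by blast
    qed
  qed auto
  have "(\<Sum>c\<in>{-2*R..2*R+1}. g c) = (\<Sum>c\<in>(\<lambda>j. -2*j) ` {-R..R}. g c) + (\<Sum>c\<in>(\<lambda>j. 2*j+1) ` {-R..R}. g c)"
    unfolding un by (rule sum.union_disjoint) (use disj in auto)
  also have "\<dots> = (\<Sum>j\<in>{-R..R}. g (-2*j)) + (\<Sum>j\<in>{-R..R}. g (2*j+1))"
    using sum.reindex[OF inj1, of g] sum.reindex[OF inj2, of g] by (simp add: comp_def)
  finally show ?thesis by (simp add: sum.distrib)
qed

lemma poch_inv_mult: "Q $ 0 = 0 \<Longrightarrow> poch Q N * inverse (poch Q N) = 1"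
  using inverse_mult_eq_1'[of "poch Q N"] poch_nth0[of Q N] by simp

lemma step_B:
  assumes c: "c \<in> {-int n..int n}" and L: "4 * n + 4 \<le> L"
  shows "eqD n (Pser (4*n+4) c) (fps_X^(Tn c) * (inverse (poch (fps_X^2) L) * inverse (poch (fps_X^2) L)))"
proof -
  define M where "M = 4*n+4"
  define x :: rf where "x = fps_X^2"
  have x0: "x $ 0 = 0" unfolding x_def by simp
  define Pm where "Pm = poch x M"
  define V where "V = inverse (poch x L)"
  have "Pser M c = (Pser M c * Pm) * inverse Pm"
    using poch_inv_mult[OF x0, of M] unfolding Pm_def by (simp add: mult.assoc)
  also have "Pser M c * Pm = fps_X^(Tn c) * G x M (int (M div 2) + c)"
    unfolding Pm_def x_def by (rule main_formula)
  finally have P: "Pser M c = fps_X^(Tn c) * (G x M (int (M div 2) + c) * inverse Pm)"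
    by (simp only: mult.assoc)
  define k where "k = nat (int (M div 2) + c)"
  have Mk: "M div 2 = 2*n+2" unfolding M_def by simp
  have k1: "int k = int (M div 2) + c" unfolding k_def Mk using c by simp
  have Gk: "G x M (int (M div 2) + c) = gb x M k"
    unfolding G_def k_def using c Mk by simp
  have kM: "k \<le> M" using k1 c Mk unfolding M_def by simp
  have kb: "n + 2 \<le> k" "k \<le> 3*n+2" using k1 c Mk by auto
  have kb2: "n + 2 \<le> M - k" using kb unfolding M_def by linarith
  have D1: "n < 2 * (min k (M - k) + 1)"
  proof -
    define mm where "mm = min k (M - k)"
    have "n + 2 \<le> mm" using kb(1) kb2 unfolding mm_def by simp
    hence "n < 2 * (mm + 1)" by simp
    thus ?thesis unfolding mm_def .
  qed
  have D2: "n < 2 * (L + 1)" using L by simp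
  have e1: "eqD n (gb x M k) V"
    unfolding x_def V_def by (rule gb_lim) (use kM D1 D2 x_def in simp_all)
  have e2: "eqD n (inverse Pm) V"
  proof -
    have "eqD n (poch x L) Pm" unfolding x_def Pm_def
      by (rule poch_eqD_le) (use L M_def in simp_all)
    hence "eqD n Pm (poch x L)" by (rule eqD_sym)
    moreover have "Pm $ 0 \<noteq> 0" unfolding Pm_def using poch_nth0[OF x0] by simp
    ultimately show ?thesis unfolding V_def by (intro eqD_inverse)
  qed
  have P': "Pser M c = fps_X^(Tn c) * (gb x M k * inverse Pm)" using P unfolding Gk .
  have "eqD n (fps_X^(Tn c) * (gb x M k * inverse Pm)) (fps_X^(Tn c) * (V * V))"
    by (intro eqD_mult eqD_refl e1 e2)
  hence "eqD n (Pser M c) (fps_X^(Tn c) * (V * V))" unfolding P' .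
  thus ?thesis unfolding M_def V_def x_def .
qed

lemma ejt_ge:
  assumes b: "b = 1 \<or> b = 3"
  shows "\<bar>j\<bar> \<le> int (ejt 4 b j)"
proof -
  have "\<bar>j\<bar> \<le> j * j"
  proof (cases "j = 0")
    case False
    have "\<bar>j\<bar> * 1 \<le> \<bar>j\<bar> * \<bar>j\<bar>" using False by (intro mult_left_mono) auto
    thus ?thesis by (simp add: abs_mult_self_eq)
  qed simp
  moreover have e: "int 4 * j * j = 4 * (j * j)" by simp
  ultimately show ?thesis using b int_ejt[of b 4 j] unfolding e by (cases "0 \<le> j") auto
qed

lemma step_E:
  assumes b: "b = 1 \<or> b = 3" and R: "R = 2*n"
  shows "eqD n (\<Sum>j\<in>{-int R..int R}. sg j * fps_X^(2 * ejt 4 b j)) (RJ (fps_X^2) 4 b R * poch (fps_X^16) R)"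
proof -
  define x :: rf where "x = fps_X^2"
  have x0: "x $ 0 = 0" unfolding x_def by simp
  have b4: "b \<le> 4" using b by auto
  have jt: "LJ x 4 b R = RJ x 4 b R" by (rule jtp[OF x0 b4]) simp
  have x16: "(fps_X::rf)^(2*(2*4)) = fps_X^16" by simp
  have xe: "x^e = fps_X^(2*e)" for e unfolding x_def by (simp add: power_mult)
  define P where "P = poch (fps_X^16 :: rf) R"
  have "RJ x 4 b R * P = (\<Sum>j\<in>{-int R..int R}. sg j * (fps_X^(2 * ejt 4 b j) * (G (fps_X^16) (2*R) (int R + j) * P)))"
    unfolding jt[symmetric] LJ_def xe x16 sum_distrib_right by (simp only: mult.assoc)
  moreover have "eqD n (\<Sum>j\<in>{-int R..int R}. sg j * fps_X^(2 * ejt 4 b j))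
      (\<Sum>j\<in>{-int R..int R}. sg j * (fps_X^(2 * ejt 4 b j) * (G (fps_X^16) (2*R) (int R + j) * P)))"
  proof (rule eqD_sum)
    fix j assume j: "j \<in> {-int R..int R}"
    define e where "e = ejt 4 b j"
    have "eqD n (fps_X^(2*e) * 1) (fps_X^(2*e) * (G (fps_X^16) (2*R) (int R + j) * P))"
    proof (rule eqD_Xpow)
      fix k assume k: "2 * e + k \<le> n"
      have je: "\<bar>j\<bar> \<le> int e" using ejt_ge[OF b] unfolding e_def by simp
      define m where "m = nat (int R + j)"
      have m1: "int m = int R + j" unfolding m_def using je k R by simp
      have Gm: "G (fps_X^16) (2*R) (int R + j) = gb (fps_X^16) (2*R) m"
        unfolding G_def m_def using m1 by simp
      have mR: "m \<le> 2*R" using m1 je k R by simp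
      have mm: "n \<le> min m (2*R - m)" using m1 je k R by (simp add: min_def) linarith
      have D1: "n < 16 * (min m (2*R - m) + 1)"
      proof -
        define q where "q = min m (2*R - m)"
        have "n \<le> q" using mm unfolding q_def by simp
        hence "n < 16 * (q + 1)" by simp
        thus ?thesis unfolding q_def .
      qed
      have g: "eqD n (gb (fps_X^16) (2*R) m) (inverse P)"
        unfolding P_def by (rule gb_lim) (use mR D1 R in simp_all)
      have P0: "P $ 0 \<noteq> 0" unfolding P_def using poch_nth0[of "fps_X^16" R] by simp
      have "eqD n (gb (fps_X^16) (2*R) m * P) (inverse P * P)" by (intro eqD_mult g eqD_refl)
      also have "inverse P * P = 1" using inverse_mult_eq_1[OF P0] .
      finally have "eqD n (G (fps_X^16) (2*R) (int R + j) * P) 1" unfolding Gm .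
      thus "(1::rf) $ k = (G (fps_X^16) (2*R) (int R + j) * P) $ k" using k unfolding eqD_def by simp
    qed
    thus "eqD n (sg j * fps_X^(2 * ejt 4 b j)) (sg j * (fps_X^(2 * ejt 4 b j) * (G (fps_X^16) (2*R) (int R + j) * P)))"
      unfolding e_def by (intro eqD_mult eqD_refl) simp
  qed
  ultimately show ?thesis unfolding P_def x_def by simp
qed

lemma prod_one_minus_0: "(\<forall>r\<in>A. 1 \<le> r) \<Longrightarrow> (\<Prod>r\<in>A. (1 - (fps_X^2)^r :: rf)) $ 0 = 1"
  by (induction A rule: infinite_finite_induct) auto

definition Sb :: "nat \<Rightarrow> nat \<Rightarrow> nat set" where
  "Sb b R = (\<lambda>i. 4 - b + 8*i) ` {..<R} \<union> (\<lambda>i. 4 + b + 8*i) ` {..<R} \<union> (\<lambda>i. 8*i) ` {1..R}"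

definition Pos :: "nat \<Rightarrow> nat \<Rightarrow> nat \<Rightarrow> rf" where
  "Pos b R L = inverse (\<Prod>r\<in>{1..L} - Sb b R. (1 - (fps_X^2)^r))"

lemma step_F:
  assumes b: "b = 1 \<or> b = 3" and L: "8 * R \<le> L"
  shows "RJ (fps_X^2) 4 b R * poch (fps_X^16) R * inverse (poch (fps_X^2) L) = Pos b R L"
proof -
  define x :: rf where "x = fps_X^2"
  define f where "f r = 1 - x^r" for r :: nat
  have inj1: "inj_on (\<lambda>i. 4 - b + 8*i) {..<R}" by (auto simp: inj_on_def)
  have inj2: "inj_on (\<lambda>i. 4 + b + 8*i) {..<R}" by (auto simp: inj_on_def)
  have inj3: "inj_on (\<lambda>i. 8*i) {1..R}" by (auto simp: inj_on_def)
  have d12: "(\<lambda>i. 4 - b + 8*i) ` {..<R} \<inter> (\<lambda>i. 4 + b + 8*i) ` {..<R} = {}"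
    using b by auto presburger+
  have d3: "((\<lambda>i. 4 - b + 8*i) ` {..<R} \<union> (\<lambda>i. 4 + b + 8*i) ` {..<R}) \<inter> (\<lambda>i. 8*i) ` {1..R} = {}"
    using b by auto presburger+
  have SP: "(\<Prod>r\<in>Sb b R. f r) = (\<Prod>i<R. f (4 - b + 8*i)) * (\<Prod>i<R. f (4 + b + 8*i)) * (\<Prod>i\<in>{1..R}. f (8*i))"
  proof -
    have "(\<Prod>r\<in>Sb b R. f r) = (\<Prod>r\<in>(\<lambda>i. 4 - b + 8*i) ` {..<R} \<union> (\<lambda>i. 4 + b + 8*i) ` {..<R}. f r) * (\<Prod>r\<in>(\<lambda>i. 8*i) ` {1..R}. f r)"
      unfolding Sb_def by (rule prod.union_disjoint) (use d3 in auto)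
    also have "(\<Prod>r\<in>(\<lambda>i. 4 - b + 8*i) ` {..<R} \<union> (\<lambda>i. 4 + b + 8*i) ` {..<R}. f r)
       = (\<Prod>r\<in>(\<lambda>i. 4 - b + 8*i) ` {..<R}. f r) * (\<Prod>r\<in>(\<lambda>i. 4 + b + 8*i) ` {..<R}. f r)"
      by (rule prod.union_disjoint) (use d12 in auto)
    finally show ?thesis
      using prod.reindex[OF inj1, of f] prod.reindex[OF inj2, of f] prod.reindex[OF inj3, of f]
      by (simp add: comp_def)
  qed
  have RJe: "RJ x 4 b R = (\<Prod>i<R. f (4 - b + 8*i)) * (\<Prod>i<R. f (4 + b + 8*i))"
    unfolding RJ_def f_def by (simp add: prod.distrib)
  have P16: "poch (fps_X^16) R = (\<Prod>i\<in>{1..R}. f (8*i))"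
    unfolding poch_def f_def x_def by (simp add: power_mult[symmetric] mult.assoc)
  have sub: "Sb b R \<subseteq> {1..L}"
  proof
    fix r assume "r \<in> Sb b R"
    then consider (a) i where "i < R" "r = 4 - b + 8*i" | (c) i where "i < R" "r = 4 + b + 8*i"
      | (d) i where "i \<in> {1..R}" "r = 8*i" unfolding Sb_def by auto
    thus "r \<in> {1..L}"
    proof cases
      case a thus ?thesis using b L by auto
    next
      case c thus ?thesis using b L by auto
    next
      case d thus ?thesis using L by auto
    qed
  qed
  have PL: "poch x L = (\<Prod>r\<in>{1..L} - Sb b R. f r) * (\<Prod>r\<in>Sb b R. f r)"
    unfolding poch_def f_def by (rule prod.subset_diff[OF sub]) simp
  have S0: "(\<Prod>r\<in>Sb b R. f r) $ 0 = 1"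
    unfolding f_def x_def by (rule prod_one_minus_0) (use sub in auto)
  have SRJ: "(\<Prod>r\<in>Sb b R. f r) = RJ x 4 b R * poch (fps_X^16) R"
    unfolding SP RJe P16 ..
  have inv1: "(\<Prod>r\<in>Sb b R. f r) * inverse (\<Prod>r\<in>Sb b R. f r) = 1"
    using inverse_mult_eq_1'[of "\<Prod>r\<in>Sb b R. f r"] S0 by simp
  have "RJ x 4 b R * poch (fps_X^16) R * inverse (poch x L)
      = (\<Prod>r\<in>Sb b R. f r) * (inverse (\<Prod>r\<in>{1..L} - Sb b R. f r) * inverse (\<Prod>r\<in>Sb b R. f r))"
    unfolding SRJ PL fps_inverse_mult ..
  also have "\<dots> = inverse (\<Prod>r\<in>{1..L} - Sb b R. f r) * ((\<Prod>r\<in>Sb b R. f r) * inverse (\<Prod>r\<in>Sb b R. f r))"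
    by (simp only: mult_ac)
  also have "\<dots> = inverse (\<Prod>r\<in>{1..L} - Sb b R. f r) * 1" unfolding inv1 ..
  also have "\<dots> = Pos b R L" unfolding Pos_def f_def x_def by simp
  finally show ?thesis unfolding x_def .
qed

lemma Pos_nonneg: "nonneg (Pos b R L)"
proof -
  have "Pos b R L = (\<Prod>r\<in>{1..L} - Sb b R. inverse (1 - fps_X^(2*r)))"
    unfolding Pos_def inverse_prod_fps by (simp add: power_mult)
  also have "nonneg \<dots>" by (intro nonneg_prod nonneg_inv) auto
  finally show ?thesis .
qed

lemma Pos_0: "Pos b R L $ 0 = 1"
  unfolding Pos_def fps_inverse_nth_0 by (subst prod_one_minus_0) auto

lemma V_facts:
  assumes L: "1 \<le> L"
  shows "nonneg (inverse (poch (fps_X^2 :: rf) L))" "1 \<le> inverse (poch (fps_X^2 :: rf) L) $ (2*t)"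
proof -
  define x :: rf where "x = fps_X^2"
  have split: "{1..L} = insert 1 {2..L}" using L by auto
  have PLs: "poch x L = (1 - x^1) * (\<Prod>r\<in>{2..L}. (1 - x^r))"
    unfolding poch_def split by (subst prod.insert) auto
  have V: "inverse (poch x L) = inverse (1 - fps_X^2) * inverse (\<Prod>r\<in>{2..L}. (1 - x^r))"
  proof -
    have "inverse (poch x L) = inverse (1 - x^1) * inverse (\<Prod>r\<in>{2..L}. (1 - x^r))"
      unfolding PLs by (rule fps_inverse_mult)
    thus ?thesis unfolding x_def by simp
  qed
  have n1: "nonneg (inverse (1 - fps_X^2 :: rf))" by (rule nonneg_inv) simp
  have n2: "nonneg (inverse (\<Prod>r\<in>{2..L}. (1 - x^r)))"
  proof -
    have "inverse (\<Prod>r\<in>{2..L}. (1 - x^r)) = (\<Prod>r\<in>{2..L}. inverse (1 - fps_X^(2*r)))"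
      unfolding inverse_prod_fps x_def by (simp add: power_mult)
    also have "nonneg \<dots>" by (intro nonneg_prod nonneg_inv) auto
    finally show ?thesis .
  qed
  have z: "inverse (\<Prod>r\<in>{2..L}. (1 - x^r)) $ 0 = 1"
    unfolding fps_inverse_nth_0 x_def by (subst prod_one_minus_0) auto
  show "nonneg (inverse (poch (fps_X^2 :: rf) L))"
    using nonneg_mult[OF n1 n2] V unfolding x_def by simp
  have "inverse (1 - fps_X^2 :: rf) $ (2*t) * inverse (\<Prod>r\<in>{2..L}. (1 - x^r)) $ (2*t - 2*t)
      \<le> (inverse (1 - fps_X^2) * inverse (\<Prod>r\<in>{2..L}. (1 - x^r))) $ (2*t)"
    by (rule mult_coeff_ge[OF n1 n2]) simp
  moreover have "inverse (1 - fps_X^2 :: rf) $ (2*t) = 1" using inv_one_minus_Xpow[of 2] by simp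
  ultimately show "1 \<le> inverse (poch (fps_X^2 :: rf) L) $ (2*t)" using z V unfolding x_def by simp
qed

lemma S_pos: "0 < (\<Sum>ys\<in>partitions n. epsr (dd ys))"
proof -
  define R where "R = 2*n"
  define L where "L = 8*R + 8"
  define M where "M = 4*n+4"
  define V where "V = inverse (poch (fps_X^2 :: rf) L)"
  define W where "W = V * V"
  define C where "C = {-int n..int n}"
  define C2 where "C2 = {-2*int R..2*int R+1}"
  define J where "J = {-int R..int R}"
  define g where "g c = fps_const (epsr c) * (fps_X^(Tn c) * W)" for c
  define F0 where "F0 = (\<Sum>c\<in>C. fps_const (epsr c) * Pser M c)"
  have A: "(\<Sum>ys\<in>partitions n. epsr (dd ys)) = F0 $ n"
    unfolding F0_def C_def M_def by (rule step_A) simp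
  have B: "eqD n F0 (\<Sum>c\<in>C. g c)"
    unfolding F0_def g_def
  proof (rule eqD_sum)
    fix c assume c: "c \<in> C"
    have "eqD n (Pser M c) (fps_X^(Tn c) * W)"
      unfolding M_def W_def V_def by (rule step_B) (use c C_def L_def R_def in auto)
    thus "eqD n (fps_const (epsr c) * Pser M c) (fps_const (epsr c) * (fps_X^(Tn c) * W))"
      by (intro eqD_mult eqD_refl)
  qed
  have Cc: "eqD n (\<Sum>c\<in>C. g c) (\<Sum>c\<in>C2. g c)"
  proof -
    have sub: "C \<subseteq> C2" unfolding C_def C2_def R_def by auto
    have "sum g C2 = sum g (C2 - C) + sum g C" by (rule sum.subset_diff[OF sub]) (simp add: C2_def)
    moreover have "eqD n (sum g (C2 - C)) (\<Sum>c\<in>C2 - C. 0)"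
    proof (rule eqD_sum)
      fix c assume "c \<in> C2 - C"
      hence "int n < \<bar>c\<bar>" unfolding C_def by auto
      hence "n < Tn c" by (rule Tn_big)
      hence "eqD n (fps_X^(Tn c) * W) 0" by (rule eqD_Xpow_zero)
      hence "eqD n (fps_const (epsr c) * (fps_X^(Tn c) * W)) (fps_const (epsr c) * 0)"
        by (intro eqD_mult eqD_refl)
      thus "eqD n (g c) 0" unfolding g_def by simp
    qed
    hence z: "eqD n (sum g (C2 - C)) 0" by simp
    have "eqD n (sum g (C2 - C) + sum g C) (0 + sum g C)" by (rule eqD_add[OF z eqD_refl])
    hence "eqD n (sum g C2) (sum g C)" using \<open>sum g C2 = sum g (C2 - C) + sum g C\<close> by simp
    thus ?thesis by (rule eqD_sym)
  qed
  have D: "(\<Sum>c\<in>C2. g c) = (\<Sum>j\<in>J. g (-2*j) + g (2*j+1))"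
    unfolding C2_def J_def by (rule split_even_odd)
  have h1: "(-2*j) mod 4 \<in> {0,1} \<longleftrightarrow> even j" for j :: int
  proof -
    have "(-2*j) mod 4 = 0 \<or> (-2*j) mod 4 = 1 \<longleftrightarrow> even j" by presburger
    thus ?thesis by simp
  qed
  have h2: "(2*j+1) mod 4 \<in> {0,1} \<longleftrightarrow> even j" for j :: int
  proof -
    have "(2*j+1) mod 4 = 0 \<or> (2*j+1) mod 4 = 1 \<longleftrightarrow> even j" by presburger
    thus ?thesis by simp
  qed
  have ep: "fps_const (epsr (-2*j)) = sg j" "fps_const (epsr (2*j+1)) = sg j" for j
    unfolding epsr_def sg_def h1 h2 by (simp_all flip: fps_const_neg)
  have T1: "Tn (-2*j) = 2 * ejt 4 1 j" for j
  proof -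
    have "int (Tn (-2*j)) = int (2 * ejt 4 1 j)" using int_Tn[of "-2*j"] int_ejt[of 1 4 j] by (simp add: algebra_simps)
    thus ?thesis by (simp only: of_nat_eq_iff)
  qed
  have T3: "Tn (2*j+1) = Suc (2 * ejt 4 3 j)" for j
  proof -
    have "int (Tn (2*j+1)) = int (Suc (2 * ejt 4 3 j))" using int_Tn[of "2*j+1"] int_ejt[of 3 4 j] by (simp add: algebra_simps)
    thus ?thesis by (simp only: of_nat_eq_iff)
  qed
  have gE: "g (-2*j) = sg j * fps_X^(2 * ejt 4 1 j) * W" for j
    unfolding g_def ep T1 by (simp only: mult.assoc)
  have gO: "g (2*j+1) = fps_X * (sg j * fps_X^(2 * ejt 4 3 j) * W)" for j
    unfolding g_def ep T3 by (simp only: power_Suc mult_ac)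
  define E1 where "E1 = (\<Sum>j\<in>J. sg j * fps_X^(2 * ejt 4 1 j))"
  define E3 where "E3 = (\<Sum>j\<in>J. sg j * fps_X^(2 * ejt 4 3 j))"
  have E: "(\<Sum>j\<in>J. g (-2*j) + g (2*j+1)) = E1 * W + fps_X * (E3 * W)"
    unfolding gE gO sum.distrib E1_def E3_def sum_distrib_right sum_distrib_left ..
  have LR: "8 * R \<le> L" unfolding L_def by simp
  have E1': "eqD n (E1 * W) (Pos 1 R L * V)"
  proof -
    have "eqD n (E1 * W) ((RJ (fps_X^2) 4 1 R * poch (fps_X^16) R) * W)"
      unfolding E1_def J_def by (intro eqD_mult eqD_refl step_E) (simp_all add: R_def)
    also have "(RJ (fps_X^2) 4 1 R * poch (fps_X^16) R) * W = Pos 1 R L * V"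
      unfolding W_def V_def using step_F[of 1 R L] LR by (simp add: mult.assoc[symmetric])
    finally show ?thesis .
  qed
  have E3': "eqD n (fps_X * (E3 * W)) (fps_X * (Pos 3 R L * V))"
  proof -
    have "eqD n (E3 * W) ((RJ (fps_X^2) 4 3 R * poch (fps_X^16) R) * W)"
      unfolding E3_def J_def by (intro eqD_mult eqD_refl step_E) (simp_all add: R_def)
    also have "(RJ (fps_X^2) 4 3 R * poch (fps_X^16) R) * W = Pos 3 R L * V"
      unfolding W_def V_def using step_F[of 3 R L] LR by (simp add: mult.assoc[symmetric])
    finally show ?thesis by (rule eqD_mult[OF eqD_refl])
  qed
  have all: "eqD n F0 (Pos 1 R L * V + fps_X * (Pos 3 R L * V))"
    using eqD_trans[OF B Cc] unfolding D E using eqD_add[OF E1' E3'] by (rule eqD_trans)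
  hence Sn: "(\<Sum>ys\<in>partitions n. epsr (dd ys)) = (Pos 1 R L * V + fps_X * (Pos 3 R L * V)) $ n"
    unfolding A eqD_def by simp
  have L1: "1 \<le> L" unfolding L_def by simp
  have nV: "nonneg V" unfolding V_def by (rule V_facts(1)[OF L1])
  have V2: "1 \<le> V $ (2*t)" for t unfolding V_def by (rule V_facts(2)[OF L1])
  have n1: "nonneg (Pos 1 R L * V)" by (intro nonneg_mult Pos_nonneg nV)
  have n3: "nonneg (Pos 3 R L * V)" by (intro nonneg_mult Pos_nonneg nV)
  show ?thesis
  proof (cases "even n")
    case True
    then obtain t where t: "n = 2*t" by (rule evenE)
    have "Pos 1 R L $ 0 * V $ (n - 0) \<le> (Pos 1 R L * V) $ n"
      by (rule mult_coeff_ge[OF Pos_nonneg nV]) simp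
    hence "1 \<le> (Pos 1 R L * V) $ n" using V2[of t] t by (simp add: Pos_0)
    moreover have "0 \<le> (fps_X * (Pos 3 R L * V)) $ n" using n3 unfolding nonneg_def by simp
    ultimately show ?thesis unfolding Sn by simp
  next
    case False
    then obtain t where t: "n = 2*t + 1" by (rule oddE)
    have "Pos 3 R L $ 0 * V $ (2*t - 0) \<le> (Pos 3 R L * V) $ (2*t)"
      by (rule mult_coeff_ge[OF Pos_nonneg nV]) simp
    hence "1 \<le> (Pos 3 R L * V) $ (2*t)" using V2[of t] by (simp add: Pos_0)
    hence "1 \<le> (fps_X * (Pos 3 R L * V)) $ n" using t by simp
    moreover have "0 \<le> (Pos 1 R L * V) $ n" using n1 unfolding nonneg_def by simp
    ultimately show ?thesis unfolding Sn by simp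
  qed
qed


lemma mod4_base:
  fixes d m :: int
  assumes "d mod 2 = m mod 2"
  shows "((m - d) mod 4 = 0) = (m mod 4 = d mod 4)" "(d mod 4) mod 2 = (m mod 4) mod 2"
proof -
  show "((m - d) mod 4 = 0) = (m mod 4 = d mod 4)"
    by (simp add: mod_eq_dvd_iff dvd_eq_mod_eq_0)
  have "(d mod 4) mod 2 = d mod 2" "(m mod 4) mod 2 = m mod 2" by (simp_all add: mod_mod_cancel)
  thus "(d mod 4) mod 2 = (m mod 4) mod 2" using assms by simp
qed

lemma four_cases: "0 \<le> (a::int) \<Longrightarrow> a < 4 \<Longrightarrow> a = 0 \<or> a = 1 \<or> a = 2 \<or> a = 3"
  by arith

lemma mod4_aux1:
  fixes d m :: int
  assumes h: "d mod 2 = m mod 2" and nf: "m mod 4 = 0 \<or> m mod 4 = 1"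
  shows "((m - d) mod 4 = 0) = (d mod 4 = 0 \<or> d mod 4 = 1)"
proof -
  have c: "d mod 4 = 0 \<or> d mod 4 = 1 \<or> d mod 4 = 2 \<or> d mod 4 = 3" by (rule four_cases) simp_all
  show ?thesis unfolding mod4_base(1)[OF h] using mod4_base(2)[OF h] nf c by auto
qed

lemma mod4_aux2:
  fixes d m :: int
  assumes h: "d mod 2 = m mod 2" and nf: "m mod 4 = 2 \<or> m mod 4 = 3"
  shows "((m - d) mod 4 = 0) = (\<not> (d mod 4 = 0 \<or> d mod 4 = 1))"
proof -
  have c: "d mod 4 = 0 \<or> d mod 4 = 1 \<or> d mod 4 = 2 \<or> d mod 4 = 3" by (rule four_cases) simp_all
  show ?thesis unfolding mod4_base(1)[OF h] using mod4_base(2)[OF h] nf c by auto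
qed

theorem mainTheorem2:
  fixes n :: nat
  shows "(n mod 4 \<in> {0, 1} \<longrightarrow> real (p_i 0 n) > real (p n) / 2) \<and>
         (n mod 4 \<in> {2, 3} \<longrightarrow> real (p_i 0 n) < real (p n) / 2)"
proof -
  define P where "P = partitions n"
  define pos where "pos = {ys \<in> P. dd ys mod 4 \<in> {0, 1}}"
  define neg where "neg = {ys \<in> P. dd ys mod 4 \<notin> {0, 1}}"
  have fP: "finite P" unfolding P_def by (rule finite_partitions)
  have fpos: "finite pos" "finite neg" unfolding pos_def neg_def using fP by simp_all
  have Pu: "P = pos \<union> neg" and dj: "pos \<inter> neg = {}" unfolding pos_def neg_def by auto
  have cardP: "card P = card pos + card neg" unfolding Pu using fpos dj by (simp add: card_Un_disjoint)
  have sumeq: "(\<Sum>ys\<in>P. epsr (dd ys)) = real (card pos) - real (card neg)"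
  proof -
    have "(\<Sum>ys\<in>P. epsr (dd ys)) = (\<Sum>ys\<in>pos. epsr (dd ys)) + (\<Sum>ys\<in>neg. epsr (dd ys))"
      unfolding Pu using fpos dj by (simp add: sum.union_disjoint)
    also have "(\<Sum>ys\<in>pos. epsr (dd ys)) = (\<Sum>ys\<in>pos. 1)"
      by (rule sum.cong) (auto simp: pos_def epsr_def)
    also have "(\<Sum>ys\<in>neg. epsr (dd ys)) = (\<Sum>ys\<in>neg. -1)"
      by (rule sum.cong) (auto simp: neg_def epsr_def)
    finally show ?thesis by simp
  qed
  have gt: "card neg < card pos" using S_pos[of n] unfolding sumeq[unfolded P_def] by simp
  have cong: "(int (num_odd ys) - int (num_odd (conj_part ys))) mod 4 = (int n - dd ys) mod 4
      \<and> dd ys mod 2 = int n mod 2" if "ys \<in> P" for ys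
  proof -
    have "sorted_wrt (\<ge>) ys" "sum_list ys = n" using that unfolding P_def partitions_def by auto
    thus ?thesis using key_cong[of ys] by simp
  qed
  have pi: "p_i 0 n = card {ys \<in> P. (int n - dd ys) mod 4 = 0}"
  proof -
    have "{ys \<in> P. (int (num_odd ys) - int (num_odd (conj_part ys))) mod 4 = 0 mod 4}
        = {ys \<in> P. (int n - dd ys) mod 4 = 0}"
    proof (rule Collect_cong)
      fix ys
      show "(ys \<in> P \<and> (int (num_odd ys) - int (num_odd (conj_part ys))) mod 4 = 0 mod 4) =
            (ys \<in> P \<and> (int n - dd ys) mod 4 = 0)"
      proof (cases "ys \<in> P")
        case True
        have e: "(int (num_odd ys) - int (num_odd (conj_part ys))) mod 4 = (int n - dd ys) mod 4"
          using cong[OF True] by simp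
        show ?thesis unfolding e by simp
      qed simp
    qed
    thus ?thesis unfolding p_i_def P_def by simp
  qed
  have pp: "p n = card P" unfolding p_def P_def ..
  show ?thesis
  proof (intro conjI impI)
    assume n: "n mod 4 \<in> {0, 1}"
    have "{ys \<in> P. (int n - dd ys) mod 4 = 0} = pos"
    proof -
      have iff: "(int n - dd ys) mod 4 = 0 \<longleftrightarrow> dd ys mod 4 \<in> {0, 1}" if "ys \<in> P" for ys
      proof -
        have h: "dd ys mod 2 = int n mod 2" using cong[OF that] by simp
        have z: "int n mod 4 = int (n mod 4)" by (simp add: zmod_int)
        have nf: "int n mod 4 = 0 \<or> int n mod 4 = 1" unfolding z using n by auto
        have "((int n - dd ys) mod 4 = 0) = (dd ys mod 4 = 0 \<or> dd ys mod 4 = 1)"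
          by (rule mod4_aux1[OF h nf])
        thus ?thesis by simp
      qed
      show ?thesis unfolding pos_def
      proof (rule Collect_cong)
        fix ys
        show "(ys \<in> P \<and> (int n - dd ys) mod 4 = 0) = (ys \<in> P \<and> dd ys mod 4 \<in> {0, 1})"
        proof (cases "ys \<in> P")
          case True show ?thesis unfolding iff[OF True] by (rule refl)
        qed simp
      qed
    qed
    thus "real (p_i 0 n) > real (p n) / 2" unfolding pi pp cardP using gt by simp
  next
    assume n: "n mod 4 \<in> {2, 3}"
    have "{ys \<in> P. (int n - dd ys) mod 4 = 0} = neg"
    proof -
      have iff: "(int n - dd ys) mod 4 = 0 \<longleftrightarrow> dd ys mod 4 \<notin> {0, 1}" if "ys \<in> P" for ys
      proof -
        have h: "dd ys mod 2 = int n mod 2" using cong[OF that] by simp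
        have z: "int n mod 4 = int (n mod 4)" by (simp add: zmod_int)
        have nf: "int n mod 4 = 2 \<or> int n mod 4 = 3" unfolding z using n by auto
        have "((int n - dd ys) mod 4 = 0) = (\<not> (dd ys mod 4 = 0 \<or> dd ys mod 4 = 1))"
          by (rule mod4_aux2[OF h nf])
        thus ?thesis by simp
      qed
      show ?thesis unfolding neg_def
      proof (rule Collect_cong)
        fix ys
        show "(ys \<in> P \<and> (int n - dd ys) mod 4 = 0) = (ys \<in> P \<and> dd ys mod 4 \<notin> {0, 1})"
        proof (cases "ys \<in> P")
          case True show ?thesis unfolding iff[OF True] by (rule refl)
        qed simp
      qed
    qed
    thus "real (p_i 0 n) < real (p n) / 2" unfolding pi pp cardP using gt by simp
  qed
qed


end
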